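(* Suppose Assumptions 1–4 hold and $p$ is convex. Let $$s=\inf\{q\ge0 : p(q)=\min_n C_n'(0)\},\qquad t=\inf\{q\ge0:\ \min_n C_n'(q)\ge p(q)+q\,\partial_+p(q)\}.$$ If $\partial_-p(s)<0$, then every monopoly output $\mathbf{x}^P$ satisfies $$\gamma(\mathbf{x}^P)\ge\frac{\partial_-p(s)}{3\,\partial_-p(s)+\partial_+p(t)}.$$
   Context: Cournot model: $N$ suppliers, inverse demand $p:[0,\infty)\to[0,\infty)$, supplier $n$ has cost $C_n:[0,\infty)\to[0,\infty)$ and chooses $x_n\ge0$; $X=\sum_n x_n$. $\partial_\pm$ denote right/left derivatives; $C_n'(0)$ is the right derivative at $0$. Assumption 1: each $C_n$ is convex, continuous, nondecreasing on $[0,\infty)$, continuously differentiable on $(0,\infty)$, with $C_n(0)=0$. Assumption 2: $p$ is continuous, nonnegative, nonincreasing, $p(0)>0$; its right derivative at $0$ exists and at every $q>0$ its left and right derivatives exist. Assumption 3: there exists $R>0$ such that $p(R)\le\min_n C_n'(0)$. Assumption 4: $p(0)>\min_n C_n'(0)$. A monopoly output is an optimal solution $\mathbf{x}^P$ of $\max_{\mathbf{x}\ge0}\ p\!\left(\sum_n x_n\right)\sum_n x_n-\sum_n C_n(x_n)$. Social welfare of $\mathbf{x}\ge0$: $W(\mathbf{x})=\int_0^X p(q)\,dq-\sum_{n=1}^N C_n(x_n)$; a social optimum $\mathbf{x}^S$ maximizes $W$. Efficiency: $\gamma(\mathbf{x})=W(\mathbf{x})/W(\mathbf{x}^S)$.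 *)

theory Defs
  imports "HOL-Analysis.Analysis"
begin

definition right_deriv :: "(real \<Rightarrow> real) \<Rightarrow> real \<Rightarrow> real" where
  "right_deriv f q = (THE D. (f has_real_derivative D) (at_right q))"

definition left_deriv :: "(real \<Rightarrow> real) \<Rightarrow> real \<Rightarrow> real" where
  "left_deriv f q = (THE D. (f has_real_derivative D) (at_left q))"

text \<open>Suppliers are indexed by n < N; an output vector is x :: nat => real,
  only the entries n < N matter.\<close>
definition feasible :: "nat \<Rightarrow> (nat \<Rightarrow> real) \<Rightarrow> bool" where
  "feasible N x \<longleftrightarrow> (\<forall>n<N. 0 \<le> x n)"

definition total :: "nat \<Rightarrow> (nat \<Rightarrow> real) \<Rightarrow> real" where
  "total N x = (\<Sum>n<N. x n)"

definition profit :: "nat \<Rightarrow> (real \<Rightarrow> real) \<Rightarrow> (nat \<Rightarrow> real \<Rightarrow> real) \<Rightarrow> (nat \<Rightarrow> real) \<Rightarrow> real" where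
  "profit N p C x = p (total N x) * total N x - (\<Sum>n<N. C n (x n))"

definition monopoly_output :: "nat \<Rightarrow> (real \<Rightarrow> real) \<Rightarrow> (nat \<Rightarrow> real \<Rightarrow> real) \<Rightarrow> (nat \<Rightarrow> real) \<Rightarrow> bool" where
  "monopoly_output N p C x \<longleftrightarrow> feasible N x \<and>
     (\<forall>y. feasible N y \<longrightarrow> profit N p C y \<le> profit N p C x)"

definition welfare :: "nat \<Rightarrow> (real \<Rightarrow> real) \<Rightarrow> (nat \<Rightarrow> real \<Rightarrow> real) \<Rightarrow> (nat \<Rightarrow> real) \<Rightarrow> real" where
  "welfare N p C x = integral {0..total N x} p - (\<Sum>n<N. C n (x n))"

definition social_optimum :: "nat \<Rightarrow> (real \<Rightarrow> real) \<Rightarrow> (nat \<Rightarrow> real \<Rightarrow> real) \<Rightarrow> (nat \<Rightarrow> real) \<Rightarrow> bool" where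
  "social_optimum N p C x \<longleftrightarrow> feasible N x \<and>
     (\<forall>y. feasible N y \<longrightarrow> welfare N p C y \<le> welfare N p C x)"

definition efficiency :: "nat \<Rightarrow> (real \<Rightarrow> real) \<Rightarrow> (nat \<Rightarrow> real \<Rightarrow> real) \<Rightarrow> (nat \<Rightarrow> real) \<Rightarrow> (nat \<Rightarrow> real) \<Rightarrow> real" where
  "efficiency N p C xS x = welfare N p C x / welfare N p C xS"

text \<open>C_n'(q): right derivative (at q>0 it equals the derivative; at 0 it is the right derivative).\<close>
definition min_mc :: "nat \<Rightarrow> (nat \<Rightarrow> real \<Rightarrow> real) \<Rightarrow> real \<Rightarrow> real" where
  "min_mc N C q = Min ((\<lambda>n. right_deriv (C n) q) ` {..<N})"

definition assm1 :: "nat \<Rightarrow> (nat \<Rightarrow> real \<Rightarrow> real) \<Rightarrow> bool" where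
  "assm1 N C \<longleftrightarrow> (\<forall>n<N.
     convex_on {0..} (C n) \<and> continuous_on {0..} (C n) \<and> mono_on {0..} (C n) \<and>
     (\<forall>q>0. C n differentiable (at q)) \<and> continuous_on {0<..} (deriv (C n)) \<and>
     C n 0 = 0)"

definition assm2 :: "(real \<Rightarrow> real) \<Rightarrow> bool" where
  "assm2 p \<longleftrightarrow> continuous_on {0..} p \<and> (\<forall>q\<ge>0. 0 \<le> p q) \<and>
     (\<forall>a b. 0 \<le> a \<and> a \<le> b \<longrightarrow> p b \<le> p a) \<and> p 0 > 0 \<and>
     (\<exists>D. (p has_real_derivative D) (at_right 0)) \<and>
     (\<forall>q>0. (\<exists>D. (p has_real_derivative D) (at_left q)) \<and>
            (\<exists>D. (p has_real_derivative D) (at_right q)))"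

definition assm3 :: "nat \<Rightarrow> (real \<Rightarrow> real) \<Rightarrow> (nat \<Rightarrow> real \<Rightarrow> real) \<Rightarrow> bool" where
  "assm3 N p C \<longleftrightarrow> (\<exists>R>0. p R \<le> min_mc N C 0)"

definition assm4 :: "nat \<Rightarrow> (real \<Rightarrow> real) \<Rightarrow> (nat \<Rightarrow> real \<Rightarrow> real) \<Rightarrow> bool" where
  "assm4 N p C \<longleftrightarrow> p 0 > min_mc N C 0"

end

theory Submission imports Defs begin

lemma slope_sw: "(x - y) / (u - v) = (y - x) / (v - (u::real))"
  by (metis minus_diff_eq minus_divide_divide)

lemma chord_mono:
  fixes f :: "real \<Rightarrow> real"
  assumes f: "convex_on {0..} f" and "0 \<le> a" "a < b" "a \<le> c" "c < d" "b \<le> d"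
  shows "(f b - f a) / (b - a) \<le> (f d - f c) / (d - c)"
proof -
  have 1: "(f b - f a) / (b - a) \<le> (f d - f a) / (d - a)"
  proof (cases "b = d")
    case False
    then have "b < d" using assms by auto
    from convex_on_slope_le(1)[OF f, of a d b] assms this
    show ?thesis by (simp add: slope_sw)
  qed simp
  have 2: "(f d - f a) / (d - a) \<le> (f d - f c) / (d - c)"
  proof (cases "a = c")
    case False
    then have "a < c" using assms by auto
    from convex_on_slope_le(2)[OF f, of a d c] assms this
    show ?thesis by (simp add: slope_sw)
  qed simp
  from 1 2 show ?thesis by linarith
qed

lemma rd_lower:
  fixes f :: "real \<Rightarrow> real"
  assumes f: "convex_on {0..} f" and D: "(f has_real_derivative D) (at_right q)"
    and "0 \<le> q" "q \<le> a" "a < b"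
  shows "D \<le> (f b - f a) / (b - a)"
proof -
  have lim: "((\<lambda>y. (f y - f q) / (y - q)) \<longlongrightarrow> D) (at_right q)"
    using D by (simp add: has_field_derivative_iff)
  have ev: "\<forall>\<^sub>F y in at_right q. q < y \<and> y < b"
    using eventually_at_right_less[of q] order_tendstoD(2)[OF tendsto_ident_at[of q "{q<..}"], of b] assms
    by (auto intro: eventually_conj)
  have "\<forall>\<^sub>F y in at_right q. (f y - f q) / (y - q) \<le> (f b - f a) / (b - a)"
  proof (rule eventually_mono[OF ev])
    fix y assume "q < y \<and> y < b"
    then show "(f y - f q) / (y - q) \<le> (f b - f a) / (b - a)"
      using assms by (intro chord_mono[OF f]) auto
  qed
  from tendsto_upperbound[OF lim this] show ?thesis by simp
qed

lemma rd_upper: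
  fixes f :: "real \<Rightarrow> real"
  assumes f: "convex_on {0..} f" and D: "(f has_real_derivative D) (at_right q)"
    and "0 \<le> a" "a < b" "b \<le> q"
  shows "(f b - f a) / (b - a) \<le> D"
proof -
  have lim: "((\<lambda>y. (f y - f q) / (y - q)) \<longlongrightarrow> D) (at_right q)"
    using D by (simp add: has_field_derivative_iff)
  have "\<forall>\<^sub>F y in at_right q. (f b - f a) / (b - a) \<le> (f y - f q) / (y - q)"
  proof (rule eventually_mono[OF eventually_at_right_less[of q]])
    fix y assume "q < y"
    then show "(f b - f a) / (b - a) \<le> (f y - f q) / (y - q)"
      using assms by (intro chord_mono[OF f]) auto
  qed
  from tendsto_lowerbound[OF lim this] show ?thesis by simp
qed

lemma ld_upper:
  fixes f :: "real \<Rightarrow> real"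
  assumes f: "convex_on {0..} f" and D: "(f has_real_derivative D) (at_left q)"
    and "0 \<le> a" "a < b" "b \<le> q"
  shows "(f b - f a) / (b - a) \<le> D"
proof -
  have lim: "((\<lambda>y. (f y - f q) / (y - q)) \<longlongrightarrow> D) (at_left q)"
    using D by (simp add: has_field_derivative_iff)
  have ev: "\<forall>\<^sub>F y in at_left q. y < q \<and> a < y"
    using assms by (subst eventually_at_left_field) (intro exI[of _ a], auto)
  have "\<forall>\<^sub>F y in at_left q. (f b - f a) / (b - a) \<le> (f y - f q) / (y - q)"
  proof (rule eventually_mono[OF ev])
    fix y assume "y < q \<and> a < y"
    then show "(f b - f a) / (b - a) \<le> (f y - f q) / (y - q)"
      using assms by (subst slope_sw, intro chord_mono[OF f]) auto
  qed
  from tendsto_lowerbound[OF lim this] show ?thesis by simp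
qed

lemma tangent:
  fixes f :: "real \<Rightarrow> real"
  assumes f: "convex_on {0..} f" and D: "(f has_real_derivative D) (at_right q)"
    and "0 \<le> q" "0 \<le> z"
  shows "f z \<ge> f q + D * (z - q)"
proof (cases z q rule: linorder_cases)
  case less
  from rd_upper[OF f D, of z q] assms less have "(f q - f z) / (q - z) \<le> D" by simp
  then have "f q - f z \<le> D * (q - z)" using less by (simp add: pos_divide_le_eq mult.commute)
  then show ?thesis by (simp add: algebra_simps)
next
  case greater
  from rd_lower[OF f D, of q z] assms greater have "D \<le> (f z - f q) / (z - q)" by simp
  then have "D * (z - q) \<le> f z - f q" using greater by (simp add: pos_le_divide_eq)
  then show ?thesis by (simp add: algebra_simps)
qed simp

lemma rd_eq:
  assumes D: "(f has_real_derivative D) (at_right q)"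
  shows "right_deriv f q = D"
  unfolding right_deriv_def
proof (rule the_equality)
  show "(f has_real_derivative D) (at_right q)" by (rule D)
  fix D' assume "(f has_real_derivative D') (at_right q)"
  then have 1: "((\<lambda>y. (f y - f q) / (y - q)) \<longlongrightarrow> D') (at_right q)"
    by (simp add: has_field_derivative_iff)
  have 2: "((\<lambda>y. (f y - f q) / (y - q)) \<longlongrightarrow> D) (at_right q)"
    using D by (simp add: has_field_derivative_iff)
  show "D' = D" by (rule tendsto_unique[OF _ 1 2]) simp
qed

lemma ld_eq:
  assumes D: "(f has_real_derivative D) (at_left q)"
  shows "left_deriv f q = D"
  unfolding left_deriv_def
proof (rule the_equality)
  show "(f has_real_derivative D) (at_left q)" by (rule D)
  fix D' assume "(f has_real_derivative D') (at_left q)"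
  then have 1: "((\<lambda>y. (f y - f q) / (y - q)) \<longlongrightarrow> D') (at_left q)"
    by (simp add: has_field_derivative_iff)
  have 2: "((\<lambda>y. (f y - f q) / (y - q)) \<longlongrightarrow> D) (at_left q)"
    using D by (simp add: has_field_derivative_iff)
  show "D' = D" by (rule tendsto_unique[OF _ 1 2]) simp
qed

lemma rd_exists0:
  fixes f :: "real \<Rightarrow> real"
  assumes f: "convex_on {0..} f" and m: "mono_on {0..} f"
  shows "\<exists>D. (f has_real_derivative D) (at_right 0)"
proof -
  let ?g = "\<lambda>y. (f y - f 0) / (y - 0)"
  have "(?g \<longlongrightarrow> Inf (?g ` ({0<..} \<inter> UNIV))) (at 0 within ({0<..} \<inter> UNIV))"
  proof (rule Lim_right_bound[where K=0])
    fix a b :: real assume "0 < a" "a \<le> b"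
    then show "?g a \<le> ?g b"
    proof (cases "a = b")
      case False
      then show ?thesis using \<open>0 < a\<close> \<open>a \<le> b\<close> by (intro chord_mono[OF f]) auto
    qed simp
  next
    fix a :: real assume "0 < a"
    then show "0 \<le> ?g a" using m by (auto simp: mono_on_def)
  qed
  then show ?thesis by (auto simp: has_field_derivative_iff)
qed

lemma sum_upd:
  fixes g :: "nat \<Rightarrow> real \<Rightarrow> real"
  assumes "n < N"
  shows "(\<Sum>k<N. g k ((x(n:=v)) k)) = (\<Sum>k<N. g k (x k)) + (g n v - g n (x n))"
proof -
  have "(\<Sum>k<N. g k ((x(n:=v)) k)) = (\<Sum>k<N. g k (x k) + (if k = n then g n v - g n (x n) else 0))"
    by (rule sum.cong) auto
  also have "\<dots> = (\<Sum>k<N. g k (x k)) + (g n v - g n (x n))"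
    using assms by (simp add: sum.distrib)
  finally show ?thesis .
qed

lemma total_upd: "n < N \<Longrightarrow> total N (x(n:=v)) = total N x + (v - x n)"
  unfolding total_def using sum_upd[of n N "\<lambda>k v. v" x v] by simp

lemma final_arith: fixes \<alpha> \<delta> Dt WS WP L X ld rd :: real
  assumes WPpos: "0 < WP" and WSWP: "WP \<le> WS" and Dt_le: "\<delta> \<le> - Dt" and \<alpha>pos: "0 < \<alpha>"
  and gap: "WS - WP \<le> L * (\<delta> * X)" and aL: "\<alpha> * L = \<delta> * X" and WPlb: "\<delta> * X^2 \<le> WP" and \<delta>0: "0 \<le> \<delta>"
  and lds: "ld = - \<alpha>" and rdt: "rd = Dt"
  shows "ld / (3 * ld + rd) \<le> WP / WS"
proof -
  have WSpos: "0 < WS" using WPpos WSWP by simp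
  have key1: "\<alpha> * (WS - WP) \<le> \<delta> * WP"
  proof -
    have "\<alpha> * (WS - WP) \<le> \<alpha> * (L * (\<delta> * X))"
      by (rule mult_left_mono) (use gap \<alpha>pos in auto)
    also have "\<dots> = (\<alpha> * L) * (\<delta> * X)" by (rule mult.assoc[symmetric])
    also have "\<dots> = (\<delta> * X) * (\<delta> * X)" by (simp only: aL)
    also have "\<dots> = \<delta> * (\<delta> * X^2)" by (simp add: power2_eq_square algebra_simps)
    also have "\<dots> \<le> \<delta> * WP" using WPlb \<delta>0 by (rule mult_left_mono)
    finally show ?thesis .
  qed
  have k3: "(\<alpha> + \<delta>) * WP \<le> (3*\<alpha> - Dt) * WP"
    by (rule mult_right_mono) (use Dt_le \<alpha>pos WPpos in auto)
  have e1: "\<alpha> * (WS - WP) = \<alpha> * WS - \<alpha> * WP" by (simp add: right_diff_distrib)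
  have e2: "(\<alpha> + \<delta>) * WP = \<alpha> * WP + \<delta> * WP" by (simp add: distrib_right)
  have key2: "\<alpha> * WS \<le> (3*\<alpha> - Dt) * WP" using key1 k3 e1 e2 by linarith
  have dpos: "0 < 3*\<alpha> - Dt" using \<alpha>pos Dt_le \<delta>0 by simp
  have "ld / (3 * ld + rd) = (-\<alpha>) / (-(3*\<alpha> - Dt))"
    unfolding lds rdt by simp
  also have "\<dots> = \<alpha> / (3*\<alpha> - Dt)" by (simp only: minus_divide_divide)
  also have "\<dots> \<le> WP / WS"
  proof -
    have "\<alpha> * WS / (3*\<alpha> - Dt) \<le> (3*\<alpha> - Dt) * WP / (3*\<alpha> - Dt)"
      by (rule divide_right_mono[OF key2]) (use dpos in simp)
    also have "\<dots> = WP" using dpos by simp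
    finally have "\<alpha> / (3*\<alpha> - Dt) * WS \<le> WP" by simp
    then show ?thesis using WSpos by (simp add: le_divide_eq)
  qed
  finally show ?thesis .
qed

theorem corollary3:
  fixes N :: nat and p :: "real \<Rightarrow> real" and C :: "nat \<Rightarrow> real \<Rightarrow> real"
    and xP xS :: "nat \<Rightarrow> real" and s t :: real
  assumes "N \<ge> 1"
    and "assm1 N C" and "assm2 p" and "assm3 N p C" and "assm4 N p C"
    and "convex_on {0..} p"
    and s_def: "s = Inf {q. 0 \<le> q \<and> p q = min_mc N C 0}"
    and t_def: "t = Inf {q. 0 \<le> q \<and> min_mc N C q \<ge> p q + q * right_deriv p q}"
    and "left_deriv p s < 0"
    and "social_optimum N p C xS"
    and "monopoly_output N p C xP"
  shows "efficiency N p C xS xP \<ge>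
           left_deriv p s / (3 * left_deriv p s + right_deriv p t)"
proof -
  define X where "X = total N xP"
  define Y where "Y = total N xS"
  define cost where "cost = (\<lambda>x. \<Sum>n<N. C n (x n))"
  define c0 where "c0 = min_mc N C 0"
  note A1 = assms(2)[unfolded assm1_def]
  note A2 = assms(3)[unfolded assm2_def]
  have Cconv: "\<And>n. n<N \<Longrightarrow> convex_on {0..} (C n)" using A1 by blast
  have Cmono: "\<And>n. n<N \<Longrightarrow> mono_on {0..} (C n)" using A1 by blast
  have C0: "\<And>n. n<N \<Longrightarrow> C n 0 = 0" using A1 by blast
  have pcont: "continuous_on {0..} p" using A2 by blast
  have pmono: "\<And>a b. 0 \<le> a \<Longrightarrow> a \<le> b \<Longrightarrow> p b \<le> p a" using A2 by blast
  have pconv: "convex_on {0..} p" using assms(6) .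
  have Crd: "\<And>n q. n<N \<Longrightarrow> 0 \<le> q \<Longrightarrow> (C n has_real_derivative right_deriv (C n) q) (at_right q)"
  proof -
    fix n and q :: real assume n: "n<N" and q: "0\<le>q"
    have "\<exists>D. (C n has_real_derivative D) (at_right q)"
    proof (cases "q = 0")
      case True thus ?thesis using rd_exists0[OF Cconv Cmono] n by simp
    next
      case False then have "q>0" using q by simp
      then have "C n differentiable (at q)" using A1 n by blast
      then have "(C n has_real_derivative deriv (C n) q) (at q)"
        by (simp add: DERIV_deriv_iff_real_differentiable)
      then show ?thesis by (intro exI) (rule has_field_derivative_at_within)
    qed
    then obtain D where D: "(C n has_real_derivative D) (at_right q)" by blast
    with rd_eq[OF D] show "(C n has_real_derivative right_deriv (C n) q) (at_right q)" by simp
  qed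
  have prd: "\<And>q. 0 \<le> q \<Longrightarrow> (p has_real_derivative right_deriv p q) (at_right q)"
  proof -
    fix q :: real assume q: "0 \<le> q"
    have "\<exists>D. (p has_real_derivative D) (at_right q)"
      using A2 q by (cases "q = 0") auto
    then obtain D where D: "(p has_real_derivative D) (at_right q)" by blast
    with rd_eq[OF D] show "(p has_real_derivative right_deriv p q) (at_right q)" by simp
  qed
  have pld: "\<And>q. 0 < q \<Longrightarrow> (p has_real_derivative left_deriv p q) (at_left q)"
  proof -
    fix q :: real assume q: "0 < q"
    have "\<exists>D. (p has_real_derivative D) (at_left q)"
      using A2 q by auto
    then obtain D where D: "(p has_real_derivative D) (at_left q)" by blast
    with ld_eq[OF D] show "(p has_real_derivative left_deriv p q) (at_left q)" by simp
  qed
  have fP: "feasible N xP" and mopt: "\<And>y. feasible N y \<Longrightarrow> profit N p C y \<le> profit N p C xP"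
    using assms(11) unfolding monopoly_output_def by auto
  have fS: "feasible N xS" and sopt: "\<And>y. feasible N y \<Longrightarrow> welfare N p C y \<le> welfare N p C xS"
    using assms(10) unfolding social_optimum_def by auto
  have xPnn: "\<And>n. n<N \<Longrightarrow> 0 \<le> xP n" using fP by (simp add: feasible_def)
  have X0: "0 \<le> X" unfolding X_def total_def using xPnn by (intro sum_nonneg) auto
  have xPle: "\<And>n. n<N \<Longrightarrow> xP n \<le> X"
    unfolding X_def total_def using xPnn by (intro member_le_sum) auto
  have profit_eq: "\<And>x. profit N p C x = p (total N x) * total N x - cost x"
    by (simp add: profit_def cost_def)
  have welfare_eq: "\<And>x. welfare N p C x = integral {0..total N x} p - cost x"
    by (simp add: welfare_def cost_def)

  have stepA: "\<And>n. n<N \<Longrightarrow> p X + X * right_deriv p X \<le> right_deriv (C n) X"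
  proof -
    fix n assume n: "n<N"
    define xm where "xm = xP n"
    have xm: "0 \<le> xm" "xm \<le> X" using xPnn[OF n] xPle[OF n] by (auto simp: xm_def)
    have ineq: "\<And>y. X < y \<Longrightarrow> (p y * y - p X * X) / (y - X) \<le> (C n y - C n X) / (y - X)"
    proof -
      fix y assume y: "X < y"
      define z where "z = xP(n := xm + (y - X))"
      have fz: "feasible N z" using fP xm y by (auto simp: feasible_def z_def)
      have tz: "total N z = y" unfolding z_def using total_upd[OF n, of xP] by (simp add: X_def xm_def)
      have cz: "cost z = cost xP + (C n (xm + (y - X)) - C n xm)"
        unfolding z_def cost_def using sum_upd[OF n, of C xP] by (simp add: xm_def)
      have "profit N p C z \<le> profit N p C xP" by (rule mopt[OF fz])
      hence 1: "p y * y - p X * X \<le> C n (xm + (y-X)) - C n xm"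
        unfolding profit_eq tz cz by (simp add: X_def)
      have "(C n (xm + (y-X)) - C n xm) / ((xm + (y-X)) - xm) \<le> (C n y - C n X) / (y - X)"
        using xm y by (intro chord_mono[OF Cconv[OF n]]) auto
      hence 2: "(C n (xm + (y-X)) - C n xm) / (y - X) \<le> (C n y - C n X) / (y - X)" by simp
      have "(p y * y - p X * X) / (y - X) \<le> (C n (xm + (y-X)) - C n xm) / (y - X)"
        using 1 y by (intro divide_right_mono) auto
      with 2 show "(p y * y - p X * X) / (y - X) \<le> (C n y - C n X) / (y - X)" by linarith
    qed
    have q: "((\<lambda>y. (p y - p X)/(y - X)) \<longlongrightarrow> right_deriv p X) (at_right X)"
      using prd[OF X0] by (simp add: has_field_derivative_iff)
    have "((\<lambda>y. (p y - p X)/(y - X) * y + p X) \<longlongrightarrow> right_deriv p X * X + p X) (at_right X)"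
      by (intro tendsto_intros q)
    moreover have "\<forall>\<^sub>F y in at_right X. (p y - p X)/(y - X) * y + p X = (p y * y - p X * X) / (y - X)"
    proof (rule eventually_mono[OF eventually_at_right_less[of X]])
      fix y assume "X < y"
      then show "(p y - p X)/(y - X) * y + p X = (p y * y - p X * X) / (y - X)"
        by (simp add: field_simps)
    qed
    ultimately have L1: "((\<lambda>y. (p y * y - p X * X) / (y - X)) \<longlongrightarrow> right_deriv p X * X + p X) (at_right X)"
      by (rule Lim_transform_eventually)
    have L2: "((\<lambda>y. (C n y - C n X)/(y - X)) \<longlongrightarrow> right_deriv (C n) X) (at_right X)"
      using Crd[OF n X0] by (simp add: has_field_derivative_iff)
    have "right_deriv p X * X + p X \<le> right_deriv (C n) X"
      by (rule tendsto_le[OF _ L2 L1]) (auto intro: eventually_mono[OF eventually_at_right_less[of X]] ineq)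
    then show "p X + X * right_deriv p X \<le> right_deriv (C n) X" by (simp add: algebra_simps)
  qed

  have XT: "p X + X * right_deriv p X \<le> min_mc N C X"
    unfolding min_mc_def using assms(1) stepA by (subst Min_ge_iff) (auto simp: lessThan_empty_iff)
  have Xpos: "0 < X"
  proof (rule ccontr)
    assume "\<not> 0 < X"
    then have "X = 0" using X0 by simp
    with XT have "p 0 \<le> min_mc N C 0" by simp
    with assms(5) show False by (simp add: assm4_def)
  qed
  define Tset where "Tset = {q. 0 \<le> q \<and> min_mc N C q \<ge> p q + q * right_deriv p q}"
  have XinT: "X \<in> Tset" using XT X0 by (simp add: Tset_def)
  have tX: "t \<le> X" unfolding t_def Tset_def[symmetric]
    by (rule cInf_lower[OF XinT]) (auto simp: Tset_def intro: bdd_belowI[of _ 0])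
  have t0: "0 \<le> t" unfolding t_def Tset_def[symmetric]
    using XinT by (intro cInf_greatest) (auto simp: Tset_def)
  define Dp where "Dp = right_deriv p X"
  define Dt where "Dt = right_deriv p t"
  have qX: "((\<lambda>y. (p y - p X)/(y - X)) \<longlongrightarrow> Dp) (at_right X)"
    using prd[OF X0] by (simp add: has_field_derivative_iff Dp_def)
  have Dp0: "Dp \<le> 0"
  proof (rule tendsto_upperbound[OF qX])
    show "\<forall>\<^sub>F y in at_right X. (p y - p X)/(y - X) \<le> 0"
    proof (rule eventually_mono[OF eventually_at_right_less[of X]])
      fix y assume "X < y"
      then show "(p y - p X)/(y - X) \<le> 0" using pmono[OF X0, of y] by (simp add: divide_nonpos_pos)
    qed
  qed simp
  have DtDp: "Dt \<le> Dp"
  proof (rule tendsto_lowerbound[OF qX])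
    show "\<forall>\<^sub>F y in at_right X. Dt \<le> (p y - p X)/(y - X)"
    proof (rule eventually_mono[OF eventually_at_right_less[of X]])
      fix y assume "X < y"
      then show "Dt \<le> (p y - p X)/(y - X)" unfolding Dt_def
        using tX t0 by (intro rd_lower[OF pconv prd[OF t0]]) auto
    qed
  qed simp
  define \<mu> where "\<mu> = p X + X * Dp"
  have cost_lin: "\<And>y. feasible N y \<Longrightarrow> cost y - cost xP \<ge> \<mu> * (total N y - X)"
  proof -
    fix y assume fy: "feasible N y"
    define d where "d = total N y - X"
    have key: "\<And>l. 0 < l \<Longrightarrow> l \<le> 1 \<Longrightarrow> cost y - cost xP \<ge> d*\<mu> + Dp*l*d^2"
    proof -
      fix l :: real assume l: "0 < l" "l \<le> 1"
      define z where "z = (\<lambda>k. xP k + l * (y k - xP k))"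
      have zk: "\<And>k. z k = (1 - l) * xP k + l * y k" by (simp add: z_def algebra_simps)
      have fz: "feasible N z" using fP fy l unfolding feasible_def zk
        by (auto intro!: add_nonneg_nonneg mult_nonneg_nonneg)
      have tz: "total N z = X + l * d"
        unfolding total_def z_def d_def X_def
        by (simp add: sum.distrib sum_distrib_left[symmetric] sum_subtractf)
      have cz: "cost z \<le> (1 - l) * cost xP + l * cost y"
      proof -
        have "cost z \<le> (\<Sum>k<N. (1 - l) * C k (xP k) + l * C k (y k))"
          unfolding cost_def
        proof (rule sum_mono)
          fix k assume "k \<in> {..<N}"
          then have k: "k < N" by simp
          have "C k ((1 - l) *\<^sub>R xP k + l *\<^sub>R y k) \<le> (1 - l) * C k (xP k) + l * C k (y k)"
            using l fP fy k by (intro convex_onD[OF Cconv[OF k]]) (auto simp: feasible_def)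
          then show "C k (z k) \<le> (1 - l) * C k (xP k) + l * C k (y k)" by (simp add: zk)
        qed
        also have "\<dots> = (1 - l) * cost xP + l * cost y"
          by (simp add: cost_def sum.distrib sum_distrib_left)
        finally show ?thesis .
      qed
      have Z0: "0 \<le> X + l * d" unfolding tz[symmetric] total_def using fz
        by (intro sum_nonneg) (auto simp: feasible_def)
      have "profit N p C z \<le> profit N p C xP" by (rule mopt[OF fz])
      hence pr: "p (X + l*d) * (X + l*d) - cost z \<le> p X * X - cost xP"
        unfolding profit_eq tz by (simp add: X_def)
      have tg: "p (X + l*d) \<ge> p X + Dp * l * d"
        using tangent[OF pconv prd[OF X0] X0 Z0] by (simp add: Dp_def)
      have "(p X + Dp * l * d) * (X + l*d) \<le> p (X + l*d) * (X + l*d)"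
        by (rule mult_right_mono[OF tg Z0])
      hence "l * (d*\<mu> + Dp*l*d^2) \<le> l * (cost y - cost xP)"
        using pr cz unfolding \<mu>_def by (simp add: algebra_simps power2_eq_square)
      then show "cost y - cost xP \<ge> d*\<mu> + Dp*l*d^2" using l by simp
    qed
    show "cost y - cost xP \<ge> \<mu> * (total N y - X)"
    proof (rule ccontr)
      assume "\<not> ?thesis"
      then have e: "0 < d*\<mu> - (cost y - cost xP)" by (simp add: d_def algebra_simps)
      define e where "e = d*\<mu> - (cost y - cost xP)"
      define K where "K = - Dp * d^2"
      have K0: "0 \<le> K" using Dp0 by (simp add: K_def mult_nonpos_nonneg)
      define l where "l = min 1 (e / (2 * (K + 1)))"
      have l: "0 < l" "l \<le> 1" using e K0 by (auto simp: l_def e_def)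
      have "l * K \<le> e / (2 * (K + 1)) * K" using K0 by (intro mult_right_mono) (auto simp: l_def)
      also have "\<dots> \<le> e / 2"
        using K0 e by (simp add: field_simps e_def)
      finally have "l * K \<le> e / 2" .
      moreover have "cost y - cost xP \<ge> d*\<mu> - l * K" using key[OF l] by (simp add: K_def algebra_simps)
      ultimately show False using e by (simp add: e_def)
    qed
  qed
  have zero_f: "feasible N (\<lambda>_. 0)" by (simp add: feasible_def)
  have zero_t: "total N (\<lambda>_. 0) = 0" by (simp add: total_def)
  have zero_c: "cost (\<lambda>_. 0) = 0" by (simp add: cost_def C0)
  have costP: "cost xP \<le> \<mu> * X"
    using cost_lin[OF zero_f] by (simp add: zero_t zero_c)
  have c0le: "\<And>n. n < N \<Longrightarrow> c0 \<le> right_deriv (C n) 0"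
    unfolding c0_def min_mc_def by (rule Min_le) auto
  have costP2: "c0 * X \<le> cost xP"
  proof -
    have "c0 * X = (\<Sum>n<N. c0 * xP n)" by (simp add: X_def total_def sum_distrib_left)
    also have "\<dots> \<le> cost xP" unfolding cost_def
    proof (rule sum_mono)
      fix n assume "n \<in> {..<N}"
      then have n: "n < N" by simp
      have "C n (xP n) \<ge> C n 0 + right_deriv (C n) 0 * (xP n - 0)"
        by (rule tangent[OF Cconv[OF n] Crd[OF n]]) (auto simp: xPnn[OF n])
      moreover have "c0 * xP n \<le> right_deriv (C n) 0 * xP n"
        by (rule mult_right_mono[OF c0le[OF n] xPnn[OF n]])
      ultimately show "c0 * xP n \<le> C n (xP n)" using C0[OF n] by simp
    qed
    finally show ?thesis .
  qed
  have c0X: "c0 * X \<le> \<mu> * X" using costP costP2 by linarith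
  have c0mu: "c0 \<le> \<mu>" using c0X Xpos by (simp add: mult_le_cancel_right_pos)
  define Sset where "Sset = {q. 0 \<le> q \<and> p q = c0}"
  obtain R where R: "R > 0" "p R \<le> c0" using assms(4) by (auto simp: assm3_def c0_def)
  have c0p0: "c0 < p 0" using assms(5) by (simp add: assm4_def c0_def)
  have "\<exists>x. 0 \<le> x \<and> x \<le> R \<and> p x = c0"
    using R c0p0 by (intro IVT2') (auto intro: continuous_on_subset[OF pcont])
  then have Sne: "Sset \<noteq> {}" by (auto simp: Sset_def)
  have Scl: "closed Sset"
  proof -
    have "closed {x \<in> {0..}. p x = c0}" by (rule continuous_closed_preimage_constant[OF pcont]) auto
    moreover have "{x \<in> {0..}. p x = c0} = Sset" by (auto simp: Sset_def)
    ultimately show ?thesis by simp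
  qed
  have sS: "s \<in> Sset" unfolding s_def c0_def[symmetric] Sset_def[symmetric]
    by (rule closed_contains_Inf[OF Sne _ Scl]) (auto simp: Sset_def intro: bdd_belowI[of _ 0])
  have s0: "0 \<le> s" and ps: "p s = c0" using sS by (auto simp: Sset_def)
  have spos: "0 < s" using s0 ps c0p0 by (cases "s = 0") auto
  define \<alpha> where "\<alpha> = - left_deriv p s"
  have \<alpha>pos: "0 < \<alpha>" using assms(9) by (simp add: \<alpha>_def)
  define \<delta> where "\<delta> = - Dp"
  have \<delta>0: "0 \<le> \<delta>" using Dp0 by (simp add: \<delta>_def)
  have mu_eq: "\<mu> = p X - \<delta> * X" by (simp add: \<mu>_def \<delta>_def)
  define L where "L = \<delta> * X / \<alpha>"
  have L0: "0 \<le> L" using \<delta>0 X0 \<alpha>pos by (simp add: L_def)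
  have aL: "\<alpha> * L = \<delta> * X" using \<alpha>pos by (simp add: L_def)
  have tail: "\<And>q. X + L \<le> q \<Longrightarrow> p q \<le> \<mu>"
  proof -
    fix q assume q: "X + L \<le> q"
    show "p q \<le> \<mu>"
    proof (cases "s \<le> q")
      case True
      then show ?thesis using pmono[OF s0 True] ps c0mu by simp
    next
      case False
      show ?thesis
      proof (cases "X < q")
        case True
        have "(p q - p X) / (q - X) \<le> left_deriv p s"
          using True False X0 by (intro ld_upper[OF pconv pld[OF spos]]) auto
        then have "p q - p X \<le> - \<alpha> * (q - X)" using True by (simp add: \<alpha>_def divide_le_eq)
        moreover have "\<alpha> * L \<le> \<alpha> * (q - X)" using q \<alpha>pos by simp
        ultimately show ?thesis using aL mu_eq by simp
      next
        case False
        then have "q = X" "L = 0" using q L0 by auto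
        then have "\<delta> * X = 0" using aL by simp
        then show ?thesis using \<open>q = X\<close> mu_eq by auto
      qed
    qed
  qed
  have intg: "\<And>a b. 0 \<le> a \<Longrightarrow> p integrable_on {a..b}"
    by (rule integrable_continuous_interval, rule continuous_on_subset[OF pcont]) auto
  have int_ub: "\<And>a b k. 0 \<le> a \<Longrightarrow> a \<le> b \<Longrightarrow> (\<And>q. a \<le> q \<Longrightarrow> q \<le> b \<Longrightarrow> p q \<le> k) \<Longrightarrow>
      integral {a..b} p \<le> (b - a) * k"
  proof -
    fix a b k :: real assume ab: "0 \<le> a" "a \<le> b" and h: "\<And>q. a \<le> q \<Longrightarrow> q \<le> b \<Longrightarrow> p q \<le> k"
    have "integral {a..b} p \<le> integral {a..b} (\<lambda>_. k)"
      by (rule integral_le[OF intg[OF ab(1)]]) (auto intro: h)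
    then show "integral {a..b} p \<le> (b - a) * k" using ab by (simp add: content_real)
  qed
  have int_lb: "\<And>a b k. 0 \<le> a \<Longrightarrow> a \<le> b \<Longrightarrow> (\<And>q. a \<le> q \<Longrightarrow> q \<le> b \<Longrightarrow> k \<le> p q) \<Longrightarrow>
      (b - a) * k \<le> integral {a..b} p"
  proof -
    fix a b k :: real assume ab: "0 \<le> a" "a \<le> b" and h: "\<And>q. a \<le> q \<Longrightarrow> q \<le> b \<Longrightarrow> k \<le> p q"
    have "integral {a..b} (\<lambda>_. k) \<le> integral {a..b} p"
      by (rule integral_le[OF _ intg[OF ab(1)]]) (auto intro: h)
    then show "(b - a) * k \<le> integral {a..b} p" using ab by (simp add: content_real)
  qed
  have comb: "\<And>a c b. 0 \<le> a \<Longrightarrow> a \<le> c \<Longrightarrow> c \<le> b \<Longrightarrow> integral {a..c} p + integral {c..b} p = integral {a..b} p"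
  proof -
    fix a c b :: real assume h: "0 \<le> a" "a \<le> c" "c \<le> b"
    show "integral {a..c} p + integral {c..b} p = integral {a..b} p"
      using h by (intro Henstock_Kurzweil_Integration.integral_combine intg) auto
  qed
  define WP where "WP = welfare N p C xP"
  define WS where "WS = welfare N p C xS"
  have WP_eq: "WP = integral {0..X} p - cost xP" by (simp add: WP_def welfare_eq X_def)
  have WS_eq: "WS = integral {0..Y} p - cost xS" by (simp add: WS_def welfare_eq Y_def)
  have intX': "(X - 0) * p X \<le> integral {0..X} p"
    by (rule int_lb) (auto intro: pmono simp: X0)
  then have intX: "X * p X \<le> integral {0..X} p" by simp
  have WPlb: "\<delta> * X^2 \<le> WP"
    using intX costP unfolding WP_eq mu_eq by (simp add: power2_eq_square algebra_simps)
  have cS: "cost xS - cost xP \<ge> \<mu> * (Y - X)" using cost_lin[OF fS] by (simp add: Y_def)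
  have Y0: "0 \<le> Y" unfolding Y_def total_def using fS by (intro sum_nonneg) (auto simp: feasible_def)
  have gap: "WS - WP \<le> L * (\<delta> * X)"
  proof (cases "Y \<le> X")
    case True
    have "integral {0..Y} p + integral {Y..X} p = integral {0..X} p" using comb[OF _ Y0 True] by simp
    moreover have "(X - Y) * p X \<le> integral {Y..X} p"
      by (rule int_lb[OF Y0 True]) (use Y0 in \<open>auto intro: pmono\<close>)
    ultimately have "WS - WP \<le> (X - Y) * (\<mu> - p X)" using cS unfolding WS_eq WP_eq
      by (simp add: algebra_simps)
    also have "\<dots> \<le> 0" using True mu_eq \<delta>0 X0 by (simp add: mult_nonneg_nonpos)
    also have "0 \<le> L * (\<delta> * X)" using L0 \<delta>0 X0 by simp
    finally show ?thesis .
  next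
    case False
    have int0Y: "integral {0..X} p + integral {X..Y} p = integral {0..Y} p" using comb[OF _ X0] False by simp
    show ?thesis
    proof (cases "Y \<le> X + L")
      case True
      have "integral {X..Y} p \<le> (Y - X) * p X"
        by (rule int_ub[OF X0]) (use False X0 in \<open>auto intro: pmono\<close>)
      then have "WS - WP \<le> (Y - X) * (p X - \<mu>)" using cS int0Y unfolding WS_eq WP_eq
        by (simp add: algebra_simps)
      also have "\<dots> = (Y - X) * (\<delta> * X)" by (simp add: mu_eq)
      also have "\<dots> \<le> L * (\<delta> * X)" using True \<delta>0 X0 by (intro mult_right_mono) auto
      finally show ?thesis .
    next
      case False2: False
      have "integral {X..X+L} p + integral {X+L..Y} p = integral {X..Y} p"
        using comb[OF X0, of "X+L" Y] L0 False2 by simp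
      moreover have "integral {X..X+L} p \<le> (X + L - X) * p X"
        by (rule int_ub[OF X0]) (use L0 X0 in \<open>auto intro: pmono\<close>)
      moreover have "integral {X+L..Y} p \<le> (Y - (X+L)) * \<mu>"
        by (rule int_ub) (use L0 X0 False2 tail in auto)
      ultimately have "WS - WP \<le> L * (p X - \<mu>)" using cS int0Y unfolding WS_eq WP_eq
        by (simp add: algebra_simps)
      then show ?thesis by (simp add: mu_eq)
    qed
  qed
  obtain m where m: "m < N" "right_deriv (C m) 0 = c0"
  proof -
    have "c0 \<in> (\<lambda>n. right_deriv (C n) 0) ` {..<N}" unfolding c0_def min_mc_def
      using assms(1) by (intro Min_in) (auto simp: lessThan_empty_iff)
    then show ?thesis using that by auto
  qed
  define h where "h = (\<lambda>y. p y - (C m y - C m 0) / y)"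
  have hlim: "(h \<longlongrightarrow> p 0 - c0) (at_right 0)"
  proof -
    have "(p \<longlongrightarrow> p 0) (at 0 within {0..})" using pcont by (simp add: continuous_on_def)
    then have 1: "(p \<longlongrightarrow> p 0) (at_right 0)" by (rule tendsto_within_subset) auto
    have 2: "((\<lambda>y. (C m y - C m 0) / y) \<longlongrightarrow> c0) (at_right 0)"
      using Crd[OF m(1), of 0] m(2) by (simp add: has_field_derivative_iff)
    show ?thesis unfolding h_def by (intro tendsto_intros 1 2)
  qed
  have ev: "\<forall>\<^sub>F y in at_right 0. 0 < y \<and> 0 < h y"
    using eventually_at_right_less[of 0] order_tendstoD(1)[OF hlim, of 0] c0p0
    by (auto intro: eventually_conj)
  have "\<exists>y. 0 < y \<and> 0 < h y"
    using frequently_ex[OF eventually_frequently[OF _ ev]] by simp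
  then obtain y where y: "0 < y" "0 < h y" by blast
  define v where "v = (\<lambda>_. 0::real)(m := y)"
  have fv: "feasible N v" using y by (simp add: feasible_def v_def)
  have tv: "total N v = y" unfolding v_def using total_upd[OF m(1), of "\<lambda>_. 0" y] by (simp add: zero_t)
  have cv: "cost v = C m y" unfolding v_def cost_def
    using sum_upd[OF m(1), of C "\<lambda>_. 0" y] C0[OF m(1)] zero_c unfolding cost_def by simp
  have "profit N p C v = y * h y" unfolding profit_eq tv cv h_def using y C0[OF m(1)]
    by (simp add: field_simps)
  then have "0 < profit N p C v" using y by simp
  with mopt[OF fv] have profP: "0 < profit N p C xP" by simp
  have profX: "profit N p C xP = p X * X - cost xP" by (simp add: profit_eq X_def)
  have WPpos: "0 < WP"
  proof -
    have "X * p X = p X * X" by (rule mult.commute)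
    then show ?thesis using profP profX intX WP_eq by linarith
  qed
  have WSWP: "WP \<le> WS" unfolding WP_def WS_def by (rule sopt[OF fP])
  have Dt_le: "\<delta> \<le> - Dt" using DtDp by (simp add: \<delta>_def)
  have lds: "left_deriv p s = - \<alpha>" by (simp add: \<alpha>_def)
  have rdt: "right_deriv p t = Dt" by (simp add: Dt_def)
  have "left_deriv p s / (3 * left_deriv p s + right_deriv p t) \<le> WP / WS"
    by (rule final_arith[OF WPpos WSWP Dt_le \<alpha>pos gap aL WPlb \<delta>0 lds rdt])
  then show ?thesis unfolding efficiency_def WP_def[symmetric] WS_def[symmetric] .
qed
end
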